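(* Let $n\ge 2$, $b\ge 2$ and $1\le r<b$ be integers with $n\ge b-r-1$. Then $\chi(G_{nb+r,b})=n+1$. More precisely, with $k=n-b+r+1$, the vertex set $\{0,1,\ldots,nb+r-1\}$ can be partitioned into $k$ blocks of $b$ consecutive integers followed by $b-r$ blocks of $b-1$ consecutive integers (i.e. $V_i=\{(i-1)b,\ldots,ib-1\}$ for $1\le i\le k$ and $V_i=\{(i-1)(b-1)+k,\ldots,i(b-1)+k-1\}$ for $k+1\le i\le n+1$), and this is a proper $(n+1)$-coloring.
   Context: For integers $a\ge 2b\ge 2$, $G_{a,b}$ is the graph with vertex set $\{0,1,\ldots,a-1\}$ in which distinct $u,v$ are adjacent if and only if $u\in\{v+b,v+b+1,\ldots,v+a-b\}$ with addition modulo $a$. $\chi(G)$ denotes the chromatic number. *)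

theory Defs
  imports Main
begin

text \<open>The circular graph G_{a,b}: vertex set {0,...,a-1}; distinct u, v are adjacent
  iff u is in {v+b, ..., v+a-b} modulo a, i.e. (u - v) mod a lies in [b, a-b].\<close>
definition circ_adj :: "nat \<Rightarrow> nat \<Rightarrow> nat \<Rightarrow> nat \<Rightarrow> bool" where
  "circ_adj a b u v \<longleftrightarrow> u < a \<and> v < a \<and> u \<noteq> v \<and>
     int b \<le> (int u - int v) mod int a \<and> (int u - int v) mod int a \<le> int a - int b"

definition proper_coloring :: "nat \<Rightarrow> nat \<Rightarrow> nat \<Rightarrow> (nat \<Rightarrow> nat) \<Rightarrow> bool" where
  "proper_coloring a b k c \<longleftrightarrow> (\<forall>v<a. c v < k) \<and> (\<forall>u v. circ_adj a b u v \<longrightarrow> c u \<noteq> c v)"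

definition chromatic_number :: "nat \<Rightarrow> nat \<Rightarrow> nat" where
  "chromatic_number a b = (LEAST k. \<exists>c. proper_coloring a b k c)"

definition independent :: "nat \<Rightarrow> nat \<Rightarrow> nat set \<Rightarrow> bool" where
  "independent a b S \<longleftrightarrow> (\<forall>u\<in>S. \<forall>v\<in>S. \<not> circ_adj a b u v)"

definition block :: "nat \<Rightarrow> nat \<Rightarrow> nat \<Rightarrow> nat \<Rightarrow> nat set" where
  "block n b r i = (let k = n + r + 1 - b in
     if i \<le> k then {(i - 1) * b .. i * b - 1}
     else {(i - 1) * (b - 1) + k .. i * (b - 1) + k - 1})"

end

theory Submission
  imports Defs
begin

lemma div_iff: "0 < (m::nat) \<Longrightarrow> (x div m = q) = (q*m \<le> x \<and> x < q*m + m)"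
  by (metis add_diff_inverse_nat diff_add_inverse2
    div_times_less_eq_dividend dividend_less_div_times le_less_Suc_eq
    less_eq_div_iff_mult_less_eq less_mult_imp_div_less mult_Suc
    not_add_less2)

lemma close_not_adj:
  assumes "u < v + b" "v < u + b" "2*b \<le> a"
  shows "\<not> circ_adj a b u v"
proof
  assume h: "circ_adj a b u v"
  hence ua: "u < a" "v < a" "u \<noteq> v" and m1: "int b \<le> (int u - int v) mod int a"
    and m2: "(int u - int v) mod int a \<le> int a - int b" by (auto simp: circ_adj_def)
  show False
  proof (cases "v < u")
    case True
    hence "(int u - int v) mod int a = int u - int v" using ua by (intro mod_pos_pos_trivial) auto
    thus False using m1 assms by linarith
  next
    case False
    have "(int u - int v) mod int a = (int u - int v + int a) mod int a" by simp
    also have "\<dots> = int u - int v + int a" using ua False by (intro mod_pos_pos_trivial) auto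
    finally have "(int u - int v) mod int a = int u - int v + int a" .
    thus False using m2 assms False ua by linarith
  qed
qed

lemma mod_diff3: "(int w - int v) mod (a::int) = ((int w - int u) mod a - (int v - int u) mod a) mod a"
  by (simp add: mod_diff_eq)

lemma eq_from_mod0:
  assumes "(int w - int v) mod int a = 0" "w < a" "v < a"
  shows "w = v"
proof -
  have "int a dvd (int w - int v)" using assms(1) by (simp add: dvd_eq_mod_eq_0)
  then obtain t where t: "int w - int v = int a * t" by (auto simp: dvd_def)
  have "t = 0"
  proof (rule ccontr)
    assume "t \<noteq> 0"
    hence "\<bar>int a * t\<bar> \<ge> int a" by (simp add: abs_mult mult_le_cancel_left1) (smt (verit))
    thus False using t assms by linarith
  qed
  thus ?thesis using t by simp
qed

lemma indep_card:
  assumes ab: "2*b \<le> a" and b0: "0 < b" and S: "S \<subseteq> {..<a}" and ind: "independent a b S"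
  shows "card S \<le> b"
proof (cases "S = {}")
  case True thus ?thesis by simp
next
  case False
  then obtain u where uS: "u \<in> S" by auto
  define d where "d v = (int v - int u) mod int a" for v
  define g where "g v = nat (if d v < int b then d v else d v - (int a - int b))" for v
  have a0: "0 < a" using ab b0 by linarith
  have drange: "0 \<le> d v \<and> d v < int a \<and> (d v < int b \<or> d v > int a - int b)" if "v \<in> S" for v
  proof -
    have "0 \<le> d v" "d v < int a" using a0 by (auto simp: d_def)
    moreover have "d v < int b \<or> d v > int a - int b"
    proof (cases "v = u")
      case True thus ?thesis using b0 by (simp add: d_def)
    next
      case False
      have "\<not> circ_adj a b v u" using ind that uS by (auto simp: independent_def)
      thus ?thesis using False that uS S by (auto simp: circ_adj_def d_def)
    qed
    ultimately show ?thesis by blast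
  qed
  have dd: "(int w - int v) mod int a = (d w - d v) mod int a" for w v
    using mod_diff3[of w v "int a" u] by (simp add: d_def)
  have "inj_on g S"
  proof (rule inj_onI)
    fix v w assume vS: "v \<in> S" and wS: "w \<in> S" and eq: "g v = g w"
    have va: "v < a" and wa: "w < a" using vS wS S by auto
    note rv = drange[OF vS] and rw = drange[OF wS]
    have "d w - d v = 0 \<or> d w - d v = int a - int b \<or> d v - d w = int a - int b"
      using eq rv rw ab unfolding g_def by (auto split: if_splits)
    moreover
    { assume "d w - d v = 0"
      hence "w = v" using dd[of w v] eq_from_mod0 va wa by simp }
    moreover
    { assume h: "d w - d v = int a - int b"
      have "(int w - int v) mod int a = int a - int b"
        proof -
        have "(d w - d v) mod int a = int a - int b" unfolding h using b0 ab by (intro mod_pos_pos_trivial) auto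
        thus ?thesis using dd[of w v] by simp
      qed
      hence "w = v \<or> circ_adj a b w v" using va wa ab by (auto simp: circ_adj_def)
      hence "w = v" using ind vS wS by (auto simp: independent_def) }
    moreover
    { assume h: "d v - d w = int a - int b"
      have "(int v - int w) mod int a = int a - int b"
        proof -
        have "(d v - d w) mod int a = int a - int b" unfolding h using b0 ab by (intro mod_pos_pos_trivial) auto
        thus ?thesis using dd[of v w] by simp
      qed
      hence "w = v \<or> circ_adj a b v w" using va wa ab by (auto simp: circ_adj_def)
      hence "w = v" using ind vS wS by (auto simp: independent_def) }
    ultimately show "v = w" by blast
  qed
  moreover have "g ` S \<subseteq> {..<b}"
  proof
    fix x assume "x \<in> g ` S"
    then obtain v where vS: "v \<in> S" and x: "x = g v" by auto
    show "x \<in> {..<b}" using drange[OF vS] x unfolding g_def by auto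
  qed
  ultimately show ?thesis using card_inj_on_le[of g S "{..<b}"] by simp
qed

lemma coloring_bound:
  assumes pc: "proper_coloring a b k c" and ab: "2*b \<le> a" and b0: "0 < b"
  shows "a \<le> k*b"
proof -
  have "{..<a} \<subseteq> (\<Union>j<k. {v. v < a \<and> c v = j})" using pc by (auto simp: proper_coloring_def)
  hence "card {..<a} \<le> card (\<Union>j<k. {v. v < a \<and> c v = j})" by (intro card_mono) auto
  also have "\<dots> \<le> (\<Sum>j<k. card {v. v < a \<and> c v = j})" by (rule card_UN_le) simp
  also have "\<dots> \<le> (\<Sum>j<k. b)"
  proof (rule sum_mono)
    fix j assume "j \<in> {..<k}"
    show "card {v. v < a \<and> c v = j} \<le> b"
      using pc apply (intro indep_card[OF ab b0])
       apply (auto simp: independent_def proper_coloring_def)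
      by metis
  qed
  finally show ?thesis by simp
qed

definition col :: "nat \<Rightarrow> nat \<Rightarrow> nat \<Rightarrow> nat" where
  "col b k v = (if v < k*b then v div b else k + (v - k*b) div (b - 1))"

lemma block_mem:
  assumes b2: "b \<ge> 2" and i1: "1 \<le> i" and i2: "i \<le> n+1" and rb: "r < b" and bn: "b \<le> n+r+1"
  shows "v \<in> block n b r i \<longleftrightarrow> v < n*b+r \<and> col b (n+r+1-b) v = i - 1"
proof -
  define k where "k = n+r+1-b"
  obtain B where bB: "b = Suc B" and B1: "1 \<le> B" using b2 by (cases b) auto
  obtain j where ij: "i = Suc j" using i1 by (cases i) auto
  have kb: "k + b = n + r + 1" using bn k_def by simp
  obtain c' where cc: "b = r + Suc c'" using less_iff_Suc_add[of r b] rb by auto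
  have nk: "n = k + c'" using kb cc by simp
  have Bc: "B = r + c'" using bB cc by simp
  have aeq: "n*b + r = k*b + (b - r)*B"
    unfolding nk Bc cc by (simp add: algebra_simps)
  have kn: "k \<le> n" using kb rb by simp
  show ?thesis
  proof (cases "j < k")
    case True
    hence blk: "block n b r i = {j*b .. j*b + B}" using bB ij k_def
      by (simp add: block_def Let_def)
    have kba: "k*b \<le> n*b+r" using aeq by simp
    have "v \<in> block n b r i \<longleftrightarrow> v div b = j" unfolding blk using div_iff[of b v j] bB by auto
    also have "\<dots> \<longleftrightarrow> v < n*b+r \<and> col b k v = j"
    proof
      assume h: "v div b = j"
      hence "v < j*b + b" using div_iff[of b v j] bB by simp
      also have "j*b + b = Suc j * b" by simp
      also have "\<dots> \<le> k*b" using True by (intro mult_le_mono1) simp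
      finally have "v < k*b" .
      thus "v < n*b+r \<and> col b k v = j" using h kba by (simp add: col_def)
    next
      assume h: "v < n*b+r \<and> col b k v = j"
      show "v div b = j"
      proof (cases "v < k*b")
        case True thus ?thesis using h by (simp add: col_def)
      next
        case False thus ?thesis using h \<open>j < k\<close> by (simp add: col_def)
      qed
    qed
    finally show ?thesis using ij k_def by simp
  next
    case False
    define m where "m = j - k"
    have jkm: "j = k + m" using False m_def by simp
    have mle: "m + 1 \<le> b - r" using jkm ij i2 kb rb by simp
    have lo: "(i - 1) * (b - 1) + k = k*b + m*B" using ij jkm bB by (simp add: algebra_simps)
    have hi: "i * (b - 1) + k - 1 = k*b + m*B + B - 1" using ij jkm bB by (simp add: algebra_simps)
    have blk: "block n b r i = {k*b + m*B .. k*b + m*B + B - 1}"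
      using False ij k_def lo hi by (simp add: block_def Let_def)
    have ub: "k*b + m*B + B \<le> n*b + r"
    proof -
      have "(m+1)*B \<le> (b-r)*B" using mle by (intro mult_le_mono1)
      thus ?thesis using aeq by (simp add: algebra_simps)
    qed
    have "v \<in> block n b r i \<longleftrightarrow> k*b + m*B \<le> v \<and> v \<le> k*b+m*B+B-1" unfolding blk by simp
    also have "\<dots> \<longleftrightarrow> k*b \<le> v \<and> m*B \<le> v - k*b \<and> v - k*b < m*B + B" using B1 by auto
    also have "\<dots> \<longleftrightarrow> k*b \<le> v \<and> (v - k*b) div B = m" using div_iff[of B "v - k*b" m] B1 by auto
    also have "\<dots> \<longleftrightarrow> v < n*b+r \<and> col b k v = j"
    proof
      assume h: "k*b \<le> v \<and> (v - k*b) div B = m"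
      hence "v < k*b + m*B + B" using div_iff[of B "v - k*b" m] B1 by auto
      thus "v < n*b+r \<and> col b k v = j" using h ub jkm bB by (simp add: col_def)
    next
      assume h: "v < n*b+r \<and> col b k v = j"
      have "\<not> v < k*b"
      proof
        assume "v < k*b"
        hence "v div b < k" using bB by (simp add: less_mult_imp_div_less)
        thus False using h \<open>v < k*b\<close> jkm by (simp add: col_def)
      qed
      thus "k*b \<le> v \<and> (v - k*b) div B = m" using h jkm bB by (simp add: col_def)
    qed
    finally show ?thesis using ij k_def by simp
  qed
qed

lemma block_close:
  assumes "b \<ge> 2" "u \<in> block n b r i" "v \<in> block n b r i"
  shows "u < v + b"
proof (cases i)
  case 0
  thus ?thesis using assms by (auto simp: block_def Let_def split: if_splits)
next
  case (Suc j)
  obtain B where bB: "b = Suc B" using assms(1) by (cases b) auto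
  show ?thesis using assms Suc bB by (auto simp: block_def Let_def algebra_simps split: if_splits)
qed

theorem mainTheorem8:
  fixes n b r :: nat
  assumes "n \<ge> 2" and "b \<ge> 2" and "1 \<le> r" and "r < b" and "int n \<ge> int b - int r - 1"
  shows "chromatic_number (n * b + r) b = n + 1
    \<and> (\<Union>i\<in>{1..n+1}. block n b r i) = {0..n * b + r - 1}
    \<and> (\<forall>i\<in>{1..n+1}. \<forall>j\<in>{1..n+1}. i \<noteq> j \<longrightarrow> block n b r i \<inter> block n b r j = {})
    \<and> (\<forall>i\<in>{1..n+1}. independent (n * b + r) b (block n b r i))"
proof -
  define a where "a = n*b + r"
  define k where "k = n + r + 1 - b"
  have bn: "b \<le> n+r+1" using assms(5) by linarith
  have ab: "2*b \<le> a" unfolding a_def using assms(1)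
    by (metis mult_le_mono1 trans_le_add1)
  have b0: "0 < b" using assms by simp
  have mem: "\<And>i v. 1 \<le> i \<Longrightarrow> i \<le> n+1 \<Longrightarrow> v \<in> block n b r i \<longleftrightarrow> v < a \<and> col b k v = i - 1"
    unfolding a_def k_def using block_mem[OF assms(2) _ _ assms(4) bn] by blast
  have colbd: "col b k v < n+1" if "v < a" for v
  proof (cases "v < k*b")
    case True
    hence "v div b < k" by (simp add: less_mult_imp_div_less)
    moreover have "k \<le> n" using k_def assms(4) by simp
    ultimately show ?thesis using True by (simp add: col_def)
  next
    case False
    obtain c' where cc: "b = r + Suc c'" using less_iff_Suc_add[of r b] assms(4) by auto
    have nk: "n = k + c'" using k_def bn cc by simp
    have "a = k*b + Suc c' * (b - 1)" unfolding a_def nk cc by (simp add: algebra_simps)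
    hence "v - k*b < Suc c' * (b - 1)" using that False by simp
    hence "(v - k*b) div (b - 1) < Suc c'" by (simp add: less_mult_imp_div_less)
    thus ?thesis using False nk by (simp add: col_def)
  qed
  have indep: "independent a b (block n b r i)" for i
    unfolding independent_def
  proof (intro ballI)
    fix u v assume "u \<in> block n b r i" "v \<in> block n b r i"
    thus "\<not> circ_adj a b u v"
      using close_not_adj[OF _ _ ab] block_close[OF assms(2)] by blast
  qed
  have pc: "proper_coloring a b (n+1) (col b k)"
    unfolding proper_coloring_def
  proof (intro conjI allI impI)
    fix v assume "v < a" thus "col b k v < n+1" by (rule colbd)
  next
    fix u v assume h: "circ_adj a b u v"
    hence ua: "u < a" "v < a" by (auto simp: circ_adj_def)
    show "col b k u \<noteq> col b k v"
    proof
      assume e: "col b k u = col b k v"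
      define i where "i = col b k u + 1"
      have i: "1 \<le> i" "i \<le> n+1" using colbd[OF ua(1)] i_def by auto
      have "u \<in> block n b r i" "v \<in> block n b r i" using mem[OF i] ua e i_def by auto
      thus False using indep h by (auto simp: independent_def)
    qed
  qed
  have chi: "chromatic_number a b = n + 1"
    unfolding chromatic_number_def
  proof (rule Least_equality)
    show "\<exists>c. proper_coloring a b (n+1) c" using pc by blast
  next
    fix y assume "\<exists>c. proper_coloring a b y c"
    then obtain c where "proper_coloring a b y c" by blast
    hence "a \<le> y*b" using coloring_bound ab b0 by blast
    thus "n + 1 \<le> y"
    proof (rule contrapos_pp)
      assume "\<not> n + 1 \<le> y"
      hence "y*b \<le> n*b" by simp
      thus "\<not> a \<le> y*b" unfolding a_def using assms(3) by linarith
    qed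
  qed
  have un: "(\<Union>i\<in>{1..n+1}. block n b r i) = {0..a - 1}"
  proof
    show "(\<Union>i\<in>{1..n+1}. block n b r i) \<subseteq> {0..a - 1}" using mem by fastforce
  next
    show "{0..a - 1} \<subseteq> (\<Union>i\<in>{1..n+1}. block n b r i)"
    proof
      fix v assume "v \<in> {0..a - 1}"
      hence va: "v < a" using ab b0 by auto
      define i where "i = col b k v + 1"
      have i: "1 \<le> i" "i \<le> n+1" using colbd[OF va] i_def by auto
      have "v \<in> block n b r i" using mem[OF i] va i_def by auto
      thus "v \<in> (\<Union>i\<in>{1..n+1}. block n b r i)" using i by auto
    qed
  qed
  have dis: "\<forall>i\<in>{1..n+1}. \<forall>j\<in>{1..n+1}. i \<noteq> j \<longrightarrow> block n b r i \<inter> block n b r j = {}"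
  proof (intro ballI impI)
    fix i j assume i: "i \<in> {1..n+1}" and j: "j \<in> {1..n+1}" and ij: "i \<noteq> j"
    show "block n b r i \<inter> block n b r j = {}"
    proof (rule ccontr)
      assume "block n b r i \<inter> block n b r j \<noteq> {}"
      then obtain v where "v \<in> block n b r i" "v \<in> block n b r j" by auto
      hence "col b k v = i - 1" "col b k v = j - 1" using mem i j by auto
      thus False using i j ij by auto
    qed
  qed
  show ?thesis using chi un dis indep unfolding a_def by blast
qed

end
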